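(* For a finite group $G$, $G=\tilde{\mathrm{F}}(G)$ if and only if the intersection of all maximal normal subgroups of $G$ coincides with $\Phi(G)$.
   Context: $\tilde{\mathrm{F}}(G)$ is defined by $\Phi(G)\subseteq\tilde{\mathrm{F}}(G)$ and $\tilde{\mathrm{F}}(G)/\Phi(G)=\mathrm{Soc}(G/\Phi(G))$, where $\Phi$ is the Frattini subgroup and $\mathrm{Soc}$ the socle. Maximal normal subgroups are proper. *)

theory Defs
  imports "HOL-Algebra.Algebra"
begin

definition maximal_subgroup :: "'a set \<Rightarrow> ('a, 'b) monoid_scheme \<Rightarrow> bool" where
  "maximal_subgroup M G \<longleftrightarrow> subgroup M G \<and> M \<noteq> carrier G \<and>
     (\<forall>K. subgroup K G \<and> M \<subseteq> K \<and> K \<noteq> carrier G \<longrightarrow> K = M)"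

text \<open>Frattini subgroup: intersection of all maximal subgroups (the whole group if there are none).\<close>
definition frattini :: "('a, 'b) monoid_scheme \<Rightarrow> 'a set" where
  "frattini G = carrier G \<inter> \<Inter> {M. maximal_subgroup M G}"

definition maximal_normal :: "'a set \<Rightarrow> ('a, 'b) monoid_scheme \<Rightarrow> bool" where
  "maximal_normal N G \<longleftrightarrow> N \<lhd> G \<and> N \<noteq> carrier G \<and>
     (\<forall>K. K \<lhd> G \<and> N \<subseteq> K \<and> K \<noteq> carrier G \<longrightarrow> K = N)"

definition minimal_normal :: "'a set \<Rightarrow> ('a, 'b) monoid_scheme \<Rightarrow> bool" where
  "minimal_normal N G \<longleftrightarrow> N \<lhd> G \<and> N \<noteq> {\<one>\<^bsub>G\<^esub>} \<and>
     (\<forall>K. K \<lhd> G \<and> K \<subseteq> N \<and> K \<noteq> {\<one>\<^bsub>G\<^esub>} \<longrightarrow> K = N)"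

definition socle :: "('a, 'b) monoid_scheme \<Rightarrow> 'a set" where
  "socle G = generate G (\<Union> {N. minimal_normal N G})"

text \<open>Generalised Fitting subgroup F~(G): the full preimage in G of Soc(G/Phi(G)),
  i.e. the union of the cosets of Phi(G) lying in Soc(G/Phi(G)).\<close>
definition gen_fitting :: "('a, 'b) monoid_scheme \<Rightarrow> 'a set" where
  "gen_fitting G = \<Union> (socle (G Mod frattini G))"

end

theory Submission imports Defs begin

context group begin

lemma normal_Inter_carrier:
  assumes "\<And>N. N \<in> S \<Longrightarrow> N \<lhd> G"
  shows "carrier G \<inter> \<Inter>S \<lhd> G"
proof (rule normal_invI)
  have sg: "\<And>N. N \<in> S \<Longrightarrow> subgroup N G" using assms normal_imp_subgroup by blast
  show "subgroup (carrier G \<inter> \<Inter>S) G"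
  proof (rule subgroupI)
    show "carrier G \<inter> \<Inter>S \<subseteq> carrier G" by blast
    have "\<one> \<in> carrier G \<inter> \<Inter>S" using sg subgroup.one_closed by auto
    then show "carrier G \<inter> \<Inter> S \<noteq> {}" by blast
  next
    fix a assume a: "a \<in> carrier G \<inter> \<Inter>S"
    have "inv a \<in> N" if "N \<in> S" for N using subgroup.m_inv_closed[OF sg[OF that]] a that by blast
    then show "inv a \<in> carrier G \<inter> \<Inter>S" using a by auto
  next
    fix a b assume a: "a \<in> carrier G \<inter> \<Inter>S" and b: "b \<in> carrier G \<inter> \<Inter>S"
    have "a \<otimes> b \<in> N" if "N \<in> S" for N using subgroup.m_closed[OF sg[OF that]] a b that by blast
    then show "a \<otimes> b \<in> carrier G \<inter> \<Inter>S" using a b by auto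
  qed
next
  fix x h assume x: "x \<in> carrier G" and h: "h \<in> carrier G \<inter> \<Inter>S"
  have "x \<otimes> h \<otimes> inv x \<in> N" if "N \<in> S" for N using normal.inv_op_closed2[OF assms[OF that] x] h that by blast
  then show "x \<otimes> h \<otimes> inv x \<in> carrier G \<inter> \<Inter>S" using x h by auto
qed
lemma set_mult_mem:
  "z \<in> A <#> B \<longleftrightarrow> (\<exists>a\<in>A. \<exists>b\<in>B. z = a \<otimes> b)"
  unfolding set_mult_def by auto

lemma normal_mult_sup1:
  assumes "A \<lhd> G" "B \<lhd> G" shows "A \<subseteq> A <#> B"
proof
  fix a assume "a \<in> A"
  moreover have "\<one> \<in> B" using assms(2) normal_imp_subgroup subgroup.one_closed by blast
  moreover have "a = a \<otimes> \<one>" using \<open>a \<in> A\<close> assms(1) normal_imp_subgroup subgroup.mem_carrier by fastforce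
  ultimately show "a \<in> A <#> B" unfolding set_mult_mem by blast
qed

lemma normal_mult_sup2:
  assumes "A \<lhd> G" "B \<lhd> G" shows "B \<subseteq> A <#> B"
proof
  fix b assume "b \<in> B"
  moreover have "\<one> \<in> A" using assms(1) normal_imp_subgroup subgroup.one_closed by blast
  moreover have "b = \<one> \<otimes> b" using \<open>b \<in> B\<close> assms(2) normal_imp_subgroup subgroup.mem_carrier by fastforce
  ultimately show "b \<in> A <#> B" unfolding set_mult_mem by blast
qed

lemma mult_in_subgroup:
  assumes "subgroup K G" "A \<subseteq> K" "B \<subseteq> K" shows "A <#> B \<subseteq> K"
  using assms unfolding set_mult_def by (auto intro: subgroup.m_closed)


lemma min_normal_meet:
  assumes "minimal_normal N G" "K \<lhd> G"
  shows "N \<inter> K = {\<one>} \<or> N \<subseteq> K"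
proof -
  have N: "N \<lhd> G" using assms(1) unfolding minimal_normal_def by blast
  have NK: "N \<inter> K \<lhd> G" using normal_subgroup_intersect[OF N assms(2)] .
  have "\<forall>K. K \<lhd> G \<and> K \<subseteq> N \<and> K \<noteq> {\<one>} \<longrightarrow> K = N" using assms(1) unfolding minimal_normal_def by blast
  then have "N \<inter> K \<noteq> {\<one>} \<longrightarrow> N \<inter> K = N" using NK by blast
  then have "N \<inter> K = {\<one>} \<or> N \<inter> K = N" by blast
  then show ?thesis by blast
qed

lemma normal_one_in: "N \<lhd> G \<Longrightarrow> \<one> \<in> N"
  by (rule subgroup.one_closed[OF normal_imp_subgroup])

lemma normal_sub: "N \<lhd> G \<Longrightarrow> N \<subseteq> carrier G"
  by (rule subgroup.subset[OF normal_imp_subgroup])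

lemma normal_mclosed: "N \<lhd> G \<Longrightarrow> a \<in> N \<Longrightarrow> b \<in> N \<Longrightarrow> a \<otimes> b \<in> N"
  by (rule subgroup.m_closed[OF normal_imp_subgroup])

lemma normal_invclosed: "N \<lhd> G \<Longrightarrow> a \<in> N \<Longrightarrow> inv a \<in> N"
  by (rule subgroup.m_inv_closed[OF normal_imp_subgroup])

lemma socle_subgroup: "subgroup (socle G) G"
proof -
  have "\<Union>{N. minimal_normal N G} \<subseteq> carrier G"
    using normal_sub unfolding minimal_normal_def by auto
  then show ?thesis unfolding socle_def by (rule generate_is_subgroup)
qed

lemma min_normal_in_socle: "minimal_normal N G \<Longrightarrow> N \<subseteq> socle G"
  unfolding socle_def by (auto intro: generate.incl)

lemma socle_if_inter_trivial:
  assumes fin: "finite (carrier G)"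
    and R: "carrier G \<inter> \<Inter>{N. maximal_normal N G} = {\<one>}"
  shows "socle G = carrier G"
proof -
  let ?M = "{N. maximal_normal N G}"
  have "?M \<subseteq> Pow (carrier G)" using normal_sub unfolding maximal_normal_def by blast
  then have finM: "finite ?M" using fin by (meson finite_Pow_iff finite_subset)
  let ?P = "\<lambda>F. F \<subseteq> ?M \<and> carrier G \<inter> \<Inter>F = {\<one>}"
  obtain F where PF: "?P F" and Fmin: "\<And>F'. ?P F' \<Longrightarrow> card F \<le> card F'"
    using ex_has_least_nat[of ?P ?M card] R by blast
  have finF: "finite F" using finM PF finite_subset by blast
  define D where "D M = carrier G \<inter> \<Inter>(F - {M})" for M
  have mnF: "maximal_normal M G" if "M \<in> F" for M using PF that by blast
  have nF: "M \<lhd> G" if "M \<in> F" for M using mnF[OF that] unfolding maximal_normal_def by blast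
  have Dn: "D M \<lhd> G" for M unfolding D_def by (rule normal_Inter_carrier) (use nF in blast)
  have DM_int: "D M \<inter> M \<subseteq> {\<one>}" if "M \<in> F" for M
  proof -
    have "D M \<inter> M \<subseteq> carrier G \<inter> \<Inter>F" unfolding D_def using that by blast
    then show ?thesis using PF by blast
  qed
  have Dnt: "D M \<noteq> {\<one>}" if "M \<in> F" for M
  proof
    assume "D M = {\<one>}"
    then have "?P (F - {M})" using PF unfolding D_def by blast
    then have "card F \<le> card (F - {M})" by (rule Fmin)
    moreover have "card (F - {M}) < card F" using finF that by (meson card_Diff1_less)
    ultimately show False by simp
  qed
  have key: "K <#> M = carrier G" if K: "K \<lhd> G" "K \<subseteq> D M" "K \<noteq> {\<one>}" and M: "M \<in> F" for K M
  proof (rule ccontr)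
    assume ne: "K <#> M \<noteq> carrier G"
    have "K \<subseteq> M \<Longrightarrow> False"
    proof -
      assume "K \<subseteq> M"
      then have "K \<subseteq> {\<one>}" using K(2) DM_int[OF M] by blast
      then show False using K(3) normal_one_in[OF K(1)] by blast
    qed
    moreover have "K <#> M = M"
      using mnF[OF M] ne normal_subgroup_set_mult_closed[OF K(1) nF[OF M]]
        normal_mult_sup2[OF K(1) nF[OF M]] unfolding maximal_normal_def by blast
    ultimately show False using normal_mult_sup1[OF K(1) nF[OF M]] by blast
  qed
  have Dmin: "minimal_normal (D M) G" if M: "M \<in> F" for M
    unfolding minimal_normal_def
  proof (intro conjI allI impI)
    show "D M \<lhd> G" by (rule Dn)
    show "D M \<noteq> {\<one>}" using Dnt[OF M] .
    fix K assume K: "K \<lhd> G \<and> K \<subseteq> D M \<and> K \<noteq> {\<one>}"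
    have KM: "K <#> M = carrier G" using key K M by blast
    show "K = D M"
    proof
      show "K \<subseteq> D M" using K by blast
      show "D M \<subseteq> K"
      proof
        fix d assume d: "d \<in> D M"
        then have "d \<in> K <#> M" using KM normal_sub[OF Dn] by blast
        then obtain k m where k: "k \<in> K" and m: "m \<in> M" and dkm: "d = k \<otimes> m"
          unfolding set_mult_mem by blast
        have kc: "k \<in> carrier G" using k K normal_sub by blast
        have mc: "m \<in> carrier G" using m nF[OF M] normal_sub by blast
        have "m = inv k \<otimes> d" using dkm kc mc by (simp add: m_assoc[symmetric])
        moreover have "inv k \<in> D M" using normal_invclosed[OF Dn] k K by blast
        ultimately have "m \<in> D M" using normal_mclosed[OF Dn] d by simp
        then have "m = \<one>" using m DM_int[OF M] by blast
        then show "d \<in> K" using dkm kc k by simp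
      qed
    qed
  qed
  have DT: "D M \<subseteq> socle G" if "M \<in> F" for M using min_normal_in_socle Dmin that by blast
  have T: "subgroup (socle G) G" by (rule socle_subgroup)
  have ind: "\<forall>h\<in>carrier G. \<exists>t\<in>socle G. \<exists>m\<in>carrier G \<inter> \<Inter>F. h = t \<otimes> m"
    using finF subset_refl
  proof (induction F rule: finite_subset_induct')
    case empty
    show ?case
    proof
      fix h assume h: "h \<in> carrier G"
      have "\<one> \<in> socle G" by (rule subgroup.one_closed[OF T])
      moreover have "h = \<one> \<otimes> h" using h by simp
      ultimately show "\<exists>t\<in>socle G. \<exists>m\<in>carrier G \<inter> \<Inter>{}. h = t \<otimes> m" using h by blast
    qed
  next
    case (insert M F')
    show ?case
    proof
      fix h assume h: "h \<in> carrier G"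
      then obtain t m where t: "t \<in> socle G" and m: "m \<in> carrier G \<inter> \<Inter>F'" and htm: "h = t \<otimes> m"
        using insert.IH by blast
      have "m \<in> D M <#> M" using key[OF Dn subset_refl Dnt[OF insert.hyps(2)] insert.hyps(2)] m by blast
      then obtain d m' where d: "d \<in> D M" and m': "m' \<in> M" and dm: "m = d \<otimes> m'"
        unfolding set_mult_mem by blast
      have dc: "d \<in> carrier G" using d normal_sub[OF Dn] by blast
      have mc': "m' \<in> carrier G" using m' nF[OF insert.hyps(2)] normal_sub by blast
      have tc: "t \<in> carrier G" using subgroup.subset[OF T] t by blast
      have m'eq: "m' = inv d \<otimes> m" using dm dc mc' by (simp add: m_assoc[symmetric])
      have "m' \<in> N" if N: "N \<in> F'" for N
      proof -
        have NF: "N \<in> F - {M}" using N insert.hyps by blast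
        then have "d \<in> N" using d unfolding D_def by blast
        moreover have "m \<in> N" using m N by blast
        moreover have "N \<lhd> G" using nF NF by blast
        ultimately show ?thesis using m'eq normal_mclosed normal_invclosed by metis
      qed
      then have "m' \<in> carrier G \<inter> \<Inter>(insert M F')" using m' mc' by blast
      moreover have "t \<otimes> d \<in> socle G" using subgroup.m_closed[OF T t] d DT[OF insert.hyps(2)] by blast
      moreover have "h = (t \<otimes> d) \<otimes> m'" using htm dm tc dc mc' by (simp add: m_assoc)
      ultimately show "\<exists>t\<in>socle G. \<exists>m\<in>carrier G \<inter> \<Inter>(insert M F'). h = t \<otimes> m" by blast
    qed
  qed
  show ?thesis
  proof
    show "socle G \<subseteq> carrier G" using subgroup.subset[OF T] .
    show "carrier G \<subseteq> socle G"
    proof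
      fix h assume h: "h \<in> carrier G"
      then obtain t m where t: "t \<in> socle G" and m: "m \<in> carrier G \<inter> \<Inter>F" and htm: "h = t \<otimes> m"
        using ind by blast
      have "m = \<one>" using m PF by blast
      then show "h \<in> socle G" using htm t subgroup.mem_carrier[OF T] by simp
    qed
  qed
qed

lemma inter_trivial_if_socle:
  assumes fin: "finite (carrier G)"
    and S: "socle G = carrier G"
  shows "carrier G \<inter> \<Inter>{N. maximal_normal N G} = {\<one>}"
proof (rule ccontr)
  let ?M = "{N. maximal_normal N G}"
  define R where "R = carrier G \<inter> \<Inter>?M"
  have Rn: "R \<lhd> G" unfolding R_def by (rule normal_Inter_carrier) (simp add: maximal_normal_def)
  assume "carrier G \<inter> \<Inter>?M \<noteq> {\<one>}"
  then have Rnt: "R \<noteq> {\<one>}" unfolding R_def .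
  let ?Q = "\<lambda>K. K \<lhd> G \<and> K \<subseteq> R \<and> K \<noteq> {\<one>}"
  obtain N where QN: "?Q N" and Nmin: "\<And>K. ?Q K \<Longrightarrow> card N \<le> card K"
    using ex_has_least_nat[of ?Q R card] Rn Rnt by blast
  have Nn: "N \<lhd> G" using QN by blast
  have finN: "finite N" using normal_sub[OF Nn] fin finite_subset by blast
  have mN: "minimal_normal N G"
    unfolding minimal_normal_def
  proof (intro conjI allI impI)
    show "N \<lhd> G" "N \<noteq> {\<one>}" using QN by blast+
    fix K assume K: "K \<lhd> G \<and> K \<subseteq> N \<and> K \<noteq> {\<one>}"
    then have "?Q K" using QN by blast
    then have "card N \<le> card K" by (rule Nmin)
    moreover have "card K \<le> card N" using K card_mono[OF finN] by blast
    ultimately have "card K = card N" by simp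
    then show "K = N" using K card_subset_eq[OF finN] by blast
  qed
  let ?Q' = "\<lambda>L. L \<lhd> G \<and> N \<inter> L = {\<one>}"
  have Q'1: "?Q' {\<one>}" using one_is_normal normal_one_in[OF Nn] by blast
  obtain L where QL: "?Q' L" and Lmax: "\<And>L'. ?Q' L' \<Longrightarrow> card (carrier G) - card L \<le> card (carrier G) - card L'"
    using ex_has_least_nat[of ?Q' "{\<one>}" "\<lambda>L. card (carrier G) - card L"] Q'1 by blast
  have Ln: "L \<lhd> G" and NL1: "N \<inter> L = {\<one>}" using QL by blast+
  have Lmax': "card L' \<le> card L" if "?Q' L'" for L'
  proof -
    have "card L' \<le> card (carrier G)" using that card_mono[OF fin normal_sub] by blast
    moreover have "card L \<le> card (carrier G)" using card_mono[OF fin normal_sub[OF Ln]] .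
    ultimately show ?thesis using Lmax[OF that] by linarith
  qed
  have NLc: "N <#> L = carrier G"
  proof (rule ccontr)
    assume Pne: "N <#> L \<noteq> carrier G"
    define P where "P = N <#> L"
    have Pn: "P \<lhd> G" unfolding P_def by (rule normal_subgroup_set_mult_closed[OF Nn Ln])
    have PG: "P \<subseteq> carrier G" by (rule normal_sub[OF Pn])
    obtain N' where mN': "minimal_normal N' G" and N'P: "\<not> N' \<subseteq> P"
    proof (rule ccontr)
      assume "\<not> thesis"
      then have "\<Union>{N. minimal_normal N G} \<subseteq> P" using that by blast
      then have "socle G \<subseteq> P" unfolding socle_def
        by (rule generate_subgroup_incl[OF _ normal_imp_subgroup[OF Pn]])
      then show False using S PG Pne P_def by blast
    qed
    have N'n: "N' \<lhd> G" using mN' unfolding minimal_normal_def by blast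
    have N'P1: "N' \<inter> P = {\<one>}" using min_normal_meet[OF mN' Pn] N'P by blast
    define L' where "L' = L <#> N'"
    have L'n: "L' \<lhd> G" unfolding L'_def by (rule normal_subgroup_set_mult_closed[OF Ln N'n])
    have "N \<inter> L' \<subseteq> {\<one>}"
    proof
      fix n assume n: "n \<in> N \<inter> L'"
      then have "n \<in> L <#> N'" unfolding L'_def by blast
      then obtain l n' where l: "l \<in> L" and n': "n' \<in> N'" and nl: "n = l \<otimes> n'"
        unfolding set_mult_mem by blast
      have lc: "l \<in> carrier G" using l normal_sub[OF Ln] by blast
      have n'c: "n' \<in> carrier G" using n' normal_sub[OF N'n] by blast
      have eq: "n' = inv l \<otimes> n" using nl lc n'c by (simp add: m_assoc[symmetric])
      have "inv l \<in> P" using normal_invclosed[OF Ln l] normal_mult_sup2[OF Nn Ln] P_def by blast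
      moreover have "n \<in> P" using n normal_mult_sup1[OF Nn Ln] P_def by blast
      ultimately have "n' \<in> P" using eq normal_mclosed[OF Pn] by simp
      then have "n' = \<one>" using n' N'P1 by blast
      then have "n = l" using nl lc by simp
      then show "n \<in> {\<one>}" using n l NL1 by blast
    qed
    moreover have "\<one> \<in> N \<inter> L'" using normal_one_in[OF Nn] normal_one_in[OF L'n] by blast
    ultimately have "?Q' L'" using L'n by blast
    then have "card L' \<le> card L" by (rule Lmax')
    moreover have "L \<subset> L'"
    proof -
      have "L \<subseteq> L'" unfolding L'_def by (rule normal_mult_sup1[OF Ln N'n])
      moreover have "N' \<subseteq> L'" unfolding L'_def by (rule normal_mult_sup2[OF Ln N'n])
      moreover have "L \<subseteq> P" unfolding P_def by (rule normal_mult_sup2[OF Nn Ln])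
      ultimately show ?thesis using N'P by blast
    qed
    moreover have "finite L'" using normal_sub[OF L'n] fin finite_subset by blast
    ultimately show False using psubset_card_mono[of L' L] by linarith
  qed
  have Nnt: "N \<noteq> {\<one>}" using QN by blast
  have mL: "maximal_normal L G"
    unfolding maximal_normal_def
  proof (intro conjI allI impI)
    show "L \<lhd> G" by (rule Ln)
    show "L \<noteq> carrier G"
    proof
      assume "L = carrier G"
      then have "N \<subseteq> L" using normal_sub[OF Nn] by blast
      then show False using NL1 Nnt by blast
    qed
    fix K assume K: "K \<lhd> G \<and> L \<subseteq> K \<and> K \<noteq> carrier G"
    show "K = L"
    proof (rule ccontr)
      assume "K \<noteq> L"
      then obtain x where xK: "x \<in> K" and xL: "x \<notin> L" using K by blast
      have Kn: "K \<lhd> G" using K by blast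
      have "x \<in> N <#> L" using NLc xK normal_sub[OF Kn] by blast
      then obtain n l where n: "n \<in> N" and l: "l \<in> L" and xnl: "x = n \<otimes> l"
        unfolding set_mult_mem by blast
      have lc: "l \<in> carrier G" using l normal_sub[OF Ln] by blast
      have nc: "n \<in> carrier G" using n normal_sub[OF Nn] by blast
      have eq: "n = x \<otimes> inv l" using xnl lc nc by (simp add: m_assoc)
      have lK: "l \<in> K" using K l by blast
      have "n \<in> K" using eq normal_mclosed[OF Kn xK normal_invclosed[OF Kn lK]] by simp
      moreover have "n \<noteq> \<one>" using xnl lc xL l by auto
      ultimately have "N \<inter> K \<noteq> {\<one>}" using n by blast
      then have "N \<subseteq> K" using min_normal_meet[OF mN Kn] by blast
      then have "N <#> L \<subseteq> K" using mult_in_subgroup[OF normal_imp_subgroup[OF Kn]] K by blast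
      then show False using NLc K normal_sub[OF Kn] by blast
    qed
  qed
  then have "R \<subseteq> L" unfolding R_def by blast
  then have "N \<subseteq> L" using QN by blast
  then show False using NL1 Nnt by blast
qed

lemma subgroup_Inter_carrier:
  assumes "\<And>N. N \<in> S \<Longrightarrow> subgroup N G"
  shows "subgroup (carrier G \<inter> \<Inter>S) G"
proof (rule subgroupI)
  show "carrier G \<inter> \<Inter>S \<subseteq> carrier G" by blast
  have "\<one> \<in> N" if "N \<in> S" for N using subgroup.one_closed[OF assms[OF that]] .
  then have "\<one> \<in> carrier G \<inter> \<Inter>S" by auto
  then show "carrier G \<inter> \<Inter> S \<noteq> {}" by blast
next
  fix a assume a: "a \<in> carrier G \<inter> \<Inter>S"
  have "inv a \<in> N" if "N \<in> S" for N using subgroup.m_inv_closed[OF assms[OF that]] a that by blast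
  then show "inv a \<in> carrier G \<inter> \<Inter>S" using a by auto
next
  fix a b assume a: "a \<in> carrier G \<inter> \<Inter>S" and b: "b \<in> carrier G \<inter> \<Inter>S"
  have "a \<otimes> b \<in> N" if "N \<in> S" for N using subgroup.m_closed[OF assms[OF that]] a b that by blast
  then show "a \<otimes> b \<in> carrier G \<inter> \<Inter>S" using a b by auto
qed

lemma inv_cancel_aux: "g \<in> carrier G \<Longrightarrow> x \<in> carrier G \<Longrightarrow> inv g \<otimes> (g \<otimes> x) = x"
  by (simp add: m_assoc[symmetric])

definition cj :: "'a \<Rightarrow> 'a \<Rightarrow> 'a" where "cj g x = g \<otimes> x \<otimes> inv g"

lemma cj_carrier: "g \<in> carrier G \<Longrightarrow> x \<in> carrier G \<Longrightarrow> cj g x \<in> carrier G"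
  unfolding cj_def by simp

lemma cj_back: "g \<in> carrier G \<Longrightarrow> x \<in> carrier G \<Longrightarrow> cj (inv g) (cj g x) = x"
  unfolding cj_def by (simp add: m_assoc inv_cancel_aux)

lemma cj_mult: "g \<in> carrier G \<Longrightarrow> x \<in> carrier G \<Longrightarrow> y \<in> carrier G \<Longrightarrow> cj g x \<otimes> cj g y = cj g (x \<otimes> y)"
  unfolding cj_def by (simp add: m_assoc inv_cancel_aux)

lemma cj_inv: "g \<in> carrier G \<Longrightarrow> x \<in> carrier G \<Longrightarrow> inv (cj g x) = cj g (inv x)"
  unfolding cj_def by (simp add: inv_mult_group m_assoc)

lemma cj_img_back: "g \<in> carrier G \<Longrightarrow> A \<subseteq> carrier G \<Longrightarrow> cj (inv g) ` (cj g ` A) = A"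
proof -
  assume g: "g \<in> carrier G" and A: "A \<subseteq> carrier G"
  have "cj (inv g) ` (cj g ` A) = (\<lambda>x. cj (inv g) (cj g x)) ` A" by (simp add: image_image)
  also have "\<dots> = (\<lambda>x. x) ` A" using cj_back[OF g] A by (intro image_cong) auto
  finally show ?thesis by simp
qed

lemma cj_img_subgroup:
  assumes g: "g \<in> carrier G" and H: "subgroup H G"
  shows "subgroup (cj g ` H) G"
proof (rule subgroupI)
  have Hc: "H \<subseteq> carrier G" using subgroup.subset[OF H] .
  show "cj g ` H \<subseteq> carrier G" using cj_carrier[OF g] Hc by blast
  show "cj g ` H \<noteq> {}" using subgroup.one_closed[OF H] by blast
next
  fix a assume "a \<in> cj g ` H"
  then obtain h where h: "h \<in> H" "a = cj g h" by blast
  have hc: "h \<in> carrier G" using h(1) subgroup.mem_carrier[OF H] by blast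
  have "inv a = cj g (inv h)" using h(2) cj_inv[OF g hc] by simp
  then show "inv a \<in> cj g ` H" using subgroup.m_inv_closed[OF H h(1)] by blast
next
  fix a b assume "a \<in> cj g ` H" "b \<in> cj g ` H"
  then obtain h k where h: "h \<in> H" "a = cj g h" and k: "k \<in> H" "b = cj g k" by blast
  have hc: "h \<in> carrier G" using h(1) subgroup.mem_carrier[OF H] by blast
  have kc: "k \<in> carrier G" using k(1) subgroup.mem_carrier[OF H] by blast
  have "a \<otimes> b = cj g (h \<otimes> k)" using h(2) k(2) cj_mult[OF g hc kc] by simp
  then show "a \<otimes> b \<in> cj g ` H" using subgroup.m_closed[OF H h(1) k(1)] by blast
qed

lemma cj_img_carrier: "g \<in> carrier G \<Longrightarrow> cj g ` carrier G = carrier G"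
proof -
  assume g: "g \<in> carrier G"
  have "cj g ` carrier G \<subseteq> carrier G" using cj_carrier[OF g] by blast
  moreover have "carrier G \<subseteq> cj g ` carrier G"
  proof
    fix x assume x: "x \<in> carrier G"
    have "cj g (cj (inv g) x) = x" using cj_back[OF inv_closed[OF g] x] g by simp
    then show "x \<in> cj g ` carrier G" using cj_carrier[OF inv_closed[OF g] x] by force
  qed
  ultimately show ?thesis by blast
qed

lemma cj_maximal:
  assumes g: "g \<in> carrier G" and M: "maximal_subgroup M G"
  shows "maximal_subgroup (cj g ` M) G"
proof -
  have Ms: "subgroup M G" using M unfolding maximal_subgroup_def by blast
  have Mc: "M \<subseteq> carrier G" using subgroup.subset[OF Ms] .
  have ig: "inv g \<in> carrier G" using g by simp
  show ?thesis unfolding maximal_subgroup_def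
  proof (intro conjI allI impI)
    show "subgroup (cj g ` M) G" by (rule cj_img_subgroup[OF g Ms])
    show "cj g ` M \<noteq> carrier G"
    proof
      assume "cj g ` M = carrier G"
      then have "cj (inv g) ` carrier G = M" using cj_img_back[OF g Mc] by simp
      then show False using cj_img_carrier[OF ig] M unfolding maximal_subgroup_def by simp
    qed
    fix K assume K: "subgroup K G \<and> cj g ` M \<subseteq> K \<and> K \<noteq> carrier G"
    have Kc: "K \<subseteq> carrier G" using K subgroup.subset by blast
    define K' where "K' = cj (inv g) ` K"
    have K's: "subgroup K' G" unfolding K'_def using cj_img_subgroup[OF ig] K by blast
    have "M \<subseteq> K'" using K cj_img_back[OF g Mc] unfolding K'_def by blast
    moreover have "K' \<noteq> carrier G"
    proof
      assume "K' = carrier G"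
      then have "cj g ` carrier G = K" unfolding K'_def using cj_img_back[OF ig Kc] g by simp
      then show False using cj_img_carrier[OF g] K by simp
    qed
    ultimately have "K' = M" using M K's unfolding maximal_subgroup_def by blast
    then have "cj g ` K' = cj g ` M" by simp
    moreover have "cj g ` K' = K" unfolding K'_def using cj_img_back[OF ig Kc] g by simp
    ultimately show "K = cj g ` M" by simp
  qed
qed

lemma frattini_normal: "frattini G \<lhd> G"
proof (rule normal_invI)
  show "subgroup (frattini G) G" unfolding frattini_def
    by (rule subgroup_Inter_carrier) (simp add: maximal_subgroup_def)
next
  fix x h assume x: "x \<in> carrier G" and h: "h \<in> frattini G"
  have hc: "h \<in> carrier G" using h unfolding frattini_def by blast
  have "x \<otimes> h \<otimes> inv x \<in> M" if M: "maximal_subgroup M G" for M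
  proof -
    have Ms: "subgroup M G" using M unfolding maximal_subgroup_def by blast
    have "maximal_subgroup (cj (inv x) ` M) G" using cj_maximal[OF inv_closed[OF x] M] .
    then have "h \<in> cj (inv x) ` M" using h unfolding frattini_def by blast
    then obtain m where m: "m \<in> M" "h = cj (inv x) m" by blast
    have mc: "m \<in> carrier G" using m(1) subgroup.mem_carrier[OF Ms] by blast
    have "cj (inv (inv x)) (cj (inv x) m) = m" using cj_back[OF inv_closed[OF x] mc] .
    then have "cj x h = m" using m(2) x by simp
    then show ?thesis using m(1) unfolding cj_def by simp
  qed
  then show "x \<otimes> h \<otimes> inv x \<in> frattini G" unfolding frattini_def using x hc by auto
qed

lemma exists_maximal_above:
  assumes fin: "finite (carrier G)" and N: "subgroup N G" and Nne: "N \<noteq> carrier G"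
  shows "\<exists>M. maximal_subgroup M G \<and> N \<subseteq> M"
proof -
  let ?Q = "\<lambda>M. subgroup M G \<and> N \<subseteq> M \<and> M \<noteq> carrier G"
  obtain M where QM: "?Q M" and Mmax: "\<And>K. ?Q K \<Longrightarrow> card (carrier G) - card M \<le> card (carrier G) - card K"
    using ex_has_least_nat[of ?Q N "\<lambda>M. card (carrier G) - card M"] N Nne by blast
  have "maximal_subgroup M G" unfolding maximal_subgroup_def
  proof (intro conjI allI impI)
    show "subgroup M G" "M \<noteq> carrier G" using QM by blast+
    fix K assume K: "subgroup K G \<and> M \<subseteq> K \<and> K \<noteq> carrier G"
    then have "?Q K" using QM by blast
    then have "card (carrier G) - card M \<le> card (carrier G) - card K" by (rule Mmax)
    moreover have Kc: "K \<subseteq> carrier G" using K subgroup.subset by blast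
    moreover have finK: "finite K" using Kc fin finite_subset by blast
    ultimately have "card K \<le> card M" using card_mono[OF fin Kc] by linarith
    moreover have "card M \<le> card K" using card_mono[OF finK] K by blast
    ultimately have "card M = card K" by simp
    then show "K = M" using card_subset_eq[OF finK] K by blast
  qed
  then show ?thesis using QM by blast
qed

lemma frattini_in_maxnormal:
  assumes fin: "finite (carrier G)" and N: "maximal_normal N G"
  shows "frattini G \<subseteq> N"
proof -
  have Nn: "N \<lhd> G" and Nne: "N \<noteq> carrier G" using N unfolding maximal_normal_def by blast+
  obtain M where M: "maximal_subgroup M G" and NM: "N \<subseteq> M"
    using exists_maximal_above[OF fin normal_imp_subgroup[OF Nn] Nne] by blast
  have Ms: "subgroup M G" using M unfolding maximal_subgroup_def by blast
  have FM: "frattini G \<subseteq> M" using M unfolding frattini_def by blast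
  have Fn: "frattini G \<lhd> G" by (rule frattini_normal)
  have P: "N <#> frattini G \<lhd> G" by (rule normal_subgroup_set_mult_closed[OF Nn Fn])
  have "N <#> frattini G \<subseteq> M" by (rule mult_in_subgroup[OF Ms NM FM])
  moreover have "M \<noteq> carrier G" using M unfolding maximal_subgroup_def by blast
  ultimately have "N <#> frattini G \<noteq> carrier G" using subgroup.subset[OF Ms] by blast
  then have "N <#> frattini G = N" using N P normal_mult_sup1[OF Nn Fn] unfolding maximal_normal_def by blast
  then show ?thesis using normal_mult_sup2[OF Nn Fn] by blast
qed
end

context normal
begin

lemma HnG: "H \<lhd> G"
  using normal_def normal_axioms subgroup_axioms is_group by blast

lemma union_rcosets_sub:
  assumes K: "subgroup K G" and HK: "H \<subseteq> K"
  shows "\<Union>(rcosets\<^bsub>G\<lparr>carrier := K\<rparr>\<^esub> H) = K"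
proof
  show "\<Union>(rcosets\<^bsub>G\<lparr>carrier := K\<rparr>\<^esub> H) \<subseteq> K"
  proof
    fix y assume "y \<in> \<Union>(rcosets\<^bsub>G\<lparr>carrier := K\<rparr>\<^esub> H)"
    then obtain k h where k: "k \<in> K" and h: "h \<in> H" and y: "y = h \<otimes> k"
      unfolding RCOSETS_def r_coset_def by auto
    have "h \<in> K" using h HK by blast
    then show "y \<in> K" using y subgroup.m_closed[OF K _ k] by simp
  qed
  show "K \<subseteq> \<Union>(rcosets\<^bsub>G\<lparr>carrier := K\<rparr>\<^esub> H)"
  proof
    fix k assume k: "k \<in> K"
    have kc: "k \<in> carrier G" using k subgroup.mem_carrier[OF K] by blast
    have "k = \<one> \<otimes> k" using kc by simp
    then have "k \<in> H #>\<^bsub>G\<lparr>carrier := K\<rparr>\<^esub> k" unfolding r_coset_def using one_closed by force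
    moreover have "H #>\<^bsub>G\<lparr>carrier := K\<rparr>\<^esub> k \<in> rcosets\<^bsub>G\<lparr>carrier := K\<rparr>\<^esub> H"
      unfolding RCOSETS_def using k by auto
    ultimately show "k \<in> \<Union>(rcosets\<^bsub>G\<lparr>carrier := K\<rparr>\<^esub> H)" by blast
  qed
qed

lemma union_full_imp:
  assumes A: "subgroup A (G Mod H)" and U: "\<Union>A = carrier G"
  shows "A = carrier (G Mod H)"
proof -
  have "A = rcosets\<^bsub>G\<lparr>carrier := \<Union>A\<rparr>\<^esub> H" by (rule factgroup_subgroup_union_factor[OF A])
  also have "\<dots> = rcosets H" using U by simp
  also have "\<dots> = carrier (G Mod H)" unfolding FactGroup_def by simp
  finally show ?thesis .
qed

lemma union_carrier_Mod: "\<Union>(carrier (G Mod H)) = carrier G"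
  unfolding FactGroup_def using rcosets_part_G[OF subgroup_axioms] by simp

lemma Mod_group: "group (G Mod H)" by (rule factorgroup_is_group)

lemma mn_up:
  assumes A: "maximal_normal A (G Mod H)"
  shows "maximal_normal (\<Union>A) G"
  unfolding maximal_normal_def
proof (intro conjI allI impI)
  have An: "A \<lhd> G Mod H" using A unfolding maximal_normal_def by blast
  have As: "subgroup A (G Mod H)" using normal_imp_subgroup[OF An] .
  show Un: "\<Union>A \<lhd> G" by (rule factgroup_subgroup_union_normal[OF An])
  show "\<Union>A \<noteq> carrier G"
    using union_full_imp[OF As] A unfolding maximal_normal_def by blast
  have HA: "H \<subseteq> \<Union>A"
  proof -
    have "\<one>\<^bsub>G Mod H\<^esub> \<in> A" by (rule subgroup.one_closed[OF As])
    then have "H \<in> A" by simp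
    then show ?thesis by blast
  qed
  fix K assume K: "K \<lhd> G \<and> \<Union>A \<subseteq> K \<and> K \<noteq> carrier G"
  have Kn: "K \<lhd> G" using K by blast
  have Ks: "subgroup K G" using normal_imp_subgroup[OF Kn] .
  have HK: "H \<subseteq> K" using HA K by blast
  define B where "B = rcosets\<^bsub>G\<lparr>carrier := K\<rparr>\<^esub> H"
  have Bn: "B \<lhd> G Mod H" unfolding B_def by (rule normality_factorization[OF HnG HK Kn])
  have UB: "\<Union>B = K" unfolding B_def by (rule union_rcosets_sub[OF Ks HK])
  have "A = rcosets\<^bsub>G\<lparr>carrier := \<Union>A\<rparr>\<^esub> H" by (rule factgroup_subgroup_union_factor[OF As])
  then have AB: "A \<subseteq> B" unfolding B_def RCOSETS_def using K by auto
  have "B \<noteq> carrier (G Mod H)"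
  proof
    assume "B = carrier (G Mod H)"
    then have "\<Union>B = carrier G" using union_carrier_Mod by simp
    then show False using UB K by simp
  qed
  then have "B = A" using A Bn AB unfolding maximal_normal_def by blast
  then show "K = \<Union>A" using UB by simp
qed

lemma mn_down:
  assumes N: "maximal_normal N G" and HN: "H \<subseteq> N"
  shows "maximal_normal (rcosets\<^bsub>G\<lparr>carrier := N\<rparr>\<^esub> H) (G Mod H)"
  unfolding maximal_normal_def
proof (intro conjI allI impI)
  have Nn: "N \<lhd> G" using N unfolding maximal_normal_def by blast
  have Ns: "subgroup N G" using normal_imp_subgroup[OF Nn] .
  have UA: "\<Union>(rcosets\<^bsub>G\<lparr>carrier := N\<rparr>\<^esub> H) = N" by (rule union_rcosets_sub[OF Ns HN])
  show "rcosets\<^bsub>G\<lparr>carrier := N\<rparr>\<^esub> H \<lhd> G Mod H" by (rule normality_factorization[OF HnG HN Nn])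
  show "rcosets\<^bsub>G\<lparr>carrier := N\<rparr>\<^esub> H \<noteq> carrier (G Mod H)"
  proof
    assume "rcosets\<^bsub>G\<lparr>carrier := N\<rparr>\<^esub> H = carrier (G Mod H)"
    then have "N = carrier G" using UA union_carrier_Mod by simp
    then show False using N unfolding maximal_normal_def by blast
  qed
  fix B assume B: "B \<lhd> G Mod H \<and> rcosets\<^bsub>G\<lparr>carrier := N\<rparr>\<^esub> H \<subseteq> B \<and> B \<noteq> carrier (G Mod H)"
  have Bn: "B \<lhd> G Mod H" using B by blast
  have Bs: "subgroup B (G Mod H)" using normal_imp_subgroup[OF Bn] .
  have UBn: "\<Union>B \<lhd> G" by (rule factgroup_subgroup_union_normal[OF Bn])
  have "N \<subseteq> \<Union>B" using B UA by blast
  moreover have "\<Union>B \<noteq> carrier G" using union_full_imp[OF Bs] B by blast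
  ultimately have UB: "\<Union>B = N" using N UBn unfolding maximal_normal_def by blast
  have "B = rcosets\<^bsub>G\<lparr>carrier := \<Union>B\<rparr>\<^esub> H" by (rule factgroup_subgroup_union_factor[OF Bs])
  then show "B = rcosets\<^bsub>G\<lparr>carrier := N\<rparr>\<^esub> H" using UB by simp
qed

lemma inter_correspond:
  assumes hA: "\<And>N. maximal_normal N G \<Longrightarrow> H \<subseteq> N"
  shows "(carrier (G Mod H) \<inter> \<Inter>{A. maximal_normal A (G Mod H)} = {\<one>\<^bsub>G Mod H\<^esub>})
     \<longleftrightarrow> (carrier G \<inter> \<Inter>{N. maximal_normal N G} = H)"
proof -
  define XX where "XX = carrier (G Mod H) \<inter> \<Inter>{A. maximal_normal A (G Mod H)}"
  define II where "II = carrier G \<inter> \<Inter>{N. maximal_normal N G}"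
  have XI: "\<Union>XX = II"
  proof
    show "\<Union>XX \<subseteq> II"
    proof
      fix x assume "x \<in> \<Union>XX"
      then obtain C where C: "C \<in> XX" and xC: "x \<in> C" by blast
      have "x \<in> carrier G" using C xC union_carrier_Mod unfolding XX_def by blast
      moreover have "x \<in> N" if N: "maximal_normal N G" for N
      proof -
        have "maximal_normal (rcosets\<^bsub>G\<lparr>carrier := N\<rparr>\<^esub> H) (G Mod H)" by (rule mn_down[OF N hA[OF N]])
        then have "C \<in> rcosets\<^bsub>G\<lparr>carrier := N\<rparr>\<^esub> H" using C unfolding XX_def by blast
        then have "x \<in> \<Union>(rcosets\<^bsub>G\<lparr>carrier := N\<rparr>\<^esub> H)" using xC by blast
        then show ?thesis
          using union_rcosets_sub[OF normal_imp_subgroup hA[OF N]] N unfolding maximal_normal_def by blast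
      qed
      ultimately show "x \<in> II" unfolding II_def by blast
    qed
    show "II \<subseteq> \<Union>XX"
    proof
      fix x assume x: "x \<in> II"
      have xc: "x \<in> carrier G" using x unfolding II_def by blast
      have "H #> x \<in> carrier (G Mod H)" unfolding FactGroup_def RCOSETS_def using xc by auto
      moreover have "H #> x \<in> A" if A: "maximal_normal A (G Mod H)" for A
      proof -
        have As: "subgroup A (G Mod H)" using A normal_imp_subgroup unfolding maximal_normal_def by blast
        have "x \<in> \<Union>A" using mn_up[OF A] x unfolding II_def by blast
        then show ?thesis using factgroup_subgroup_union_char[OF As] by blast
      qed
      ultimately have "H #> x \<in> XX" unfolding XX_def by blast
      moreover have "x \<in> H #> x" by (rule rcos_self[OF xc subgroup_axioms])
      ultimately show "x \<in> \<Union>XX" by blast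
    qed
  qed
  have HX: "H \<in> XX"
  proof -
    have "\<one>\<^bsub>G Mod H\<^esub> \<in> A" if "maximal_normal A (G Mod H)" for A
      using that subgroup.one_closed normal_imp_subgroup unfolding maximal_normal_def by metis
    moreover have "\<one>\<^bsub>G Mod H\<^esub> \<in> carrier (G Mod H)" using monoid.one_closed[OF group.is_monoid[OF Mod_group]] .
    ultimately show ?thesis unfolding XX_def by auto
  qed
  have "XX = {H} \<longleftrightarrow> II = H"
  proof
    assume "XX = {H}" then show "II = H" using XI by simp
  next
    assume IH: "II = H"
    have "C = H" if C: "C \<in> XX" for C
    proof -
      have "C \<in> rcosets H" using C unfolding XX_def FactGroup_def by simp
      then obtain c where c: "c \<in> carrier G" and Cc: "C = H #> c" unfolding RCOSETS_def by blast
      have "c \<in> C" using rcos_self[OF c subgroup_axioms] Cc by simp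
      then have "c \<in> H" using C XI IH by blast
      then show ?thesis using Cc rcos_const[OF is_group] by simp
    qed
    then show "XX = {H}" using HX by blast
  qed
  then show ?thesis unfolding XX_def II_def by simp
qed

end


theorem theorem4:
  fixes G :: "('a, 'b) monoid_scheme"
  assumes "group G" and "finite (carrier G)"
  shows "gen_fitting G = carrier G \<longleftrightarrow>
         carrier G \<inter> \<Inter> {N. maximal_normal N G} = frattini G"
proof -
  interpret group G by fact
  have Fn: "frattini G \<lhd> G" by (rule frattini_normal)
  interpret F: normal "frattini G" G by (rule Fn)
  let ?Q = "G Mod frattini G"
  have Qg: "group ?Q" by (rule F.Mod_group)
  have "carrier ?Q \<subseteq> Pow (carrier G)"
    unfolding FactGroup_def using rcosets_subset_PowG[OF F.subgroup_axioms] by simp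
  then have finQ: "finite (carrier ?Q)" using assms(2) by (meson finite_Pow_iff finite_subset)
  have S: "subgroup (socle ?Q) ?Q" by (rule group.socle_subgroup[OF Qg])
  have "gen_fitting G = carrier G \<longleftrightarrow> socle ?Q = carrier ?Q"
    unfolding gen_fitting_def using F.union_full_imp[OF S] F.union_carrier_Mod by auto
  also have "\<dots> \<longleftrightarrow> carrier ?Q \<inter> \<Inter>{A. maximal_normal A ?Q} = {\<one>\<^bsub>?Q\<^esub>}"
    using group.socle_if_inter_trivial[OF Qg finQ] group.inter_trivial_if_socle[OF Qg finQ] by blast
  also have "\<dots> \<longleftrightarrow> carrier G \<inter> \<Inter>{N. maximal_normal N G} = frattini G"
    by (rule F.inter_correspond) (rule frattini_in_maxnormal[OF assms(2)])
  finally show ?thesis .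
qed

end
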